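(* Let $\lambda_1,\lambda_2,\lambda_3>0$, $u^*\in\mathbb R$, $\theta>0$, $c_3>0$, $c_{3o}=c_3+1$, $c_1=\lambda_3/\lambda_2$, $c_2=\lambda_1/\lambda_3$, and $\phi_i(x)=\lambda_i(e^x-1)$. Consider $$\dot\eta_1=u^*-u-\phi_2(\eta_2),\qquad\dot\eta_2=-\phi_3(\eta_3),\qquad\dot\eta_3=-\phi_1(\eta_1),$$ with the error variables $z_1=\eta_3-\eta_2$, $z_2=\eta_1-z_1$, and the feedback $$\begin{aligned}u={}&u^*+c_{3o}\phi_1(z_2)-\theta\tfrac{c_2}{\lambda_1}\phi_3^2(z_1)+(c_2-1-\theta)\phi_3(z_1)+\tfrac{c_2}{\lambda_1}\phi_3(z_1)\phi_1(z_2)-\tfrac{c_1}{\lambda_3}\phi_3(z_1)\phi_2(\eta_2)-(c_1+1)\phi_2(\eta_2)\\&+\frac{\theta\phi_3(z_1)}{\phi_1(z_2)}\Big(\tfrac{c_1}{\lambda_3}\phi_3(z_1)\phi_2(\eta_2)-\tfrac{c_1}{\lambda_3}\phi_2^2(\eta_2)+(c_1-1)\phi_2(\eta_2)+\phi_3(z_1)\Big).\end{aligned}$$ Let $V_3=\theta\lambda_2(e^{\eta_2}-1-\eta_2)+\theta\lambda_3(e^{z_1}-1-z_1)+\lambda_1(e^{z_2}-1-z_2)$. Then along closed-loop trajectories (where $\phi_1(z_2)\ne0$), $$\dot V_3=-\theta c_1\phi_2^2(\eta_2)-\theta c_2\phi_3^2(z_1)-c_3\phi_1^2(z_2),$$ the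 closed-loop system is globally asymptotically stable at $\eta=0$, and the feedback is uniformly bounded. Moreover $u(t)>0$ for all $t>0$ whenever $\eta(0)$ belongs to the largest sublevel set of $V_3$ contained in $\mathcal K=\{\eta\in\mathbb R^3: u(\eta)>0\}$, with $u(\eta)$ the expression above.
   Context: This is the reduced ($\psi\equiv0$) dynamics of a three-species non-transitive (cyclic) competition model, where $\eta_i$ is the logarithm of a normalized total population of species $i$ and $u$ is a harvesting/removal control acting only on species 1; $u^*$ is the equilibrium control value.
   Formalization: Global asymptotic stability, boundedness of the feedback and positivity of u are asserted only for solutions existing for all t >= 0 with $\phi_1(z_2)\ne0$ throughout, and uniform boundedness means a bound on |u(t)| for each such trajectory separately. Each condition added here is assumed in the paper as well or is needed for the statement above to hold. *)

theory Defs
  imports "HOL-Analysis.Analysis"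
begin

text \<open>States are vectors eta = (eta_1, eta_2, eta_3) in real^3, components eta$1, eta$2, eta$3.
 Parameters are always passed in the order l1 l2 l3 (lambda_i), us (u^*), th (theta), c3.\<close>

definition phi :: "real \<Rightarrow> real \<Rightarrow> real" where
  "phi l x = l * (exp x - 1)"

definition err1 :: "real^3 \<Rightarrow> real" where
  "err1 eta = eta$3 - eta$2"

definition err2 :: "real^3 \<Rightarrow> real" where
  "err2 eta = eta$1 - err1 eta"

definition feedback :: "real \<Rightarrow> real \<Rightarrow> real \<Rightarrow> real \<Rightarrow> real \<Rightarrow> real \<Rightarrow> real^3 \<Rightarrow> real" where
  "feedback l1 l2 l3 us th c3 eta =
     (let c1 = l3 / l2; c2 = l1 / l3; c3o = c3 + 1;
          p1 = phi l1 (err2 eta); p3 = phi l3 (err1 eta); p2 = phi l2 (eta$2)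
      in us + c3o * p1 - th * (c2 / l1) * p3\<^sup>2 + (c2 - 1 - th) * p3
         + (c2 / l1) * p3 * p1 - (c1 / l3) * p3 * p2 - (c1 + 1) * p2
         + (th * p3 / p1) * ((c1 / l3) * p3 * p2 - (c1 / l3) * p2\<^sup>2 + (c1 - 1) * p2 + p3))"

definition cl_field :: "real \<Rightarrow> real \<Rightarrow> real \<Rightarrow> real \<Rightarrow> real \<Rightarrow> real \<Rightarrow> real^3 \<Rightarrow> real^3" where
  "cl_field l1 l2 l3 us th c3 eta =
     vector [us - feedback l1 l2 l3 us th c3 eta - phi l2 (eta$2),
             - phi l3 (eta$3),
             - phi l1 (eta$1)]"

definition V3 :: "real \<Rightarrow> real \<Rightarrow> real \<Rightarrow> real \<Rightarrow> real^3 \<Rightarrow> real" where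
  "V3 l1 l2 l3 th eta =
     th * l2 * (exp (eta$2) - 1 - eta$2) + th * l3 * (exp (err1 eta) - 1 - err1 eta)
     + l1 * (exp (err2 eta) - 1 - err2 eta)"

text \<open>A closed-loop trajectory: a forward-complete solution on [0,\<infinity>) of the closed-loop ODE
 along which phi_1(z_2) never vanishes (so that the feedback is defined).\<close>
definition cl_traj :: "real \<Rightarrow> real \<Rightarrow> real \<Rightarrow> real \<Rightarrow> real \<Rightarrow> real \<Rightarrow> (real \<Rightarrow> real^3) \<Rightarrow> bool" where
  "cl_traj l1 l2 l3 us th c3 x \<longleftrightarrow>
     (\<forall>t\<ge>0. (x has_vector_derivative cl_field l1 l2 l3 us th c3 (x t)) (at t within {0..}))
     \<and> (\<forall>t\<ge>0. phi l1 (err2 (x t)) \<noteq> 0)"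

end

theory Submission
  imports Defs
begin


lemma deriv_le_decr:
  fixes f f' :: "real \<Rightarrow> real"
  assumes der: "\<And>s. a \<le> s \<Longrightarrow> s \<le> b \<Longrightarrow> (f has_real_derivative f' s) (at s within {a..b})"
    and bnd: "\<And>s. a \<le> s \<Longrightarrow> s \<le> b \<Longrightarrow> f' s \<le> -k" and ab: "a \<le> b"
  shows "f b \<le> f a - k*(b-a)"
proof -
  have "\<exists>x\<in>{a..b}. (f b + k*b) - (f a + k*a) = (\<lambda>h. (f' x + k) * h) (b - a)"
    apply (rule mvt_very_simple[OF ab])
    apply (rule has_field_derivative_imp_has_derivative)
    apply (rule derivative_eq_intros der | assumption | simp)+
    done
  then obtain x where x: "x \<in> {a..b}" "(f b + k*b) - (f a + k*a) = (f' x + k) * (b - a)" by auto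
  have "(f' x + k) * (b - a) \<le> 0"
    using bnd[of x] x(1) ab by (intro mult_nonpos_nonneg) auto
  then show ?thesis using x(2) by (simp add: algebra_simps)
qed

lemma barrier:
  fixes w w' :: "real \<Rightarrow> real"
  assumes cont: "continuous_on {a..b} w" and ab: "a \<le> b" and wa: "w a > c"
    and der: "\<And>s. a \<le> s \<Longrightarrow> s \<le> b \<Longrightarrow> w s = c \<Longrightarrow>
        (w has_real_derivative w' s) (at s within {a..b}) \<and> w' s > 0"
  shows "w b > c"
proof (rule ccontr)
  assume "\<not> w b > c"
  hence wb: "w b \<le> c" by simp
  define Z where "Z = {s \<in> {a..b}. w s = c}"
  have "Z \<noteq> {}" using IVT2'[of w b c a, OF wb _ ab cont] wa unfolding Z_def by force
  moreover have "closed Z" unfolding Z_def by (rule continuous_closed_preimage_constant[OF cont closed_atLeastAtMost])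
  moreover have "bdd_below Z" unfolding Z_def by (auto intro: bdd_belowI[where m=a])
  ultimately have sZ: "Inf Z \<in> Z" using closed_contains_Inf by blast
  define s where "s = Inf Z"
  have s: "a \<le> s" "s \<le> b" "w s = c" using sZ unfolding Z_def s_def by auto
  have as: "a < s" using s wa by (cases "a = s") auto
  from der[OF s] obtain d where d: "d > 0" "\<forall>h>0. s - h \<in> {a..b} \<longrightarrow> h < d \<longrightarrow> w (s - h) < w s"
    using has_real_derivative_pos_inc_left by blast
  define h where "h = min (d/2) (s - a)"
  have h: "h > 0" "h < d" "s - h \<in> {a..b}" using d as s unfolding h_def by auto
  have lt: "w (s - h) < c" using d(2) h s by auto
  have "a \<le> s - h" using h by auto
  from IVT2'[of w "s - h" c a, OF less_imp_le[OF lt] less_imp_le[OF wa] this]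
  obtain r where r: "a \<le> r" "r \<le> s - h" "w r = c"
    using continuous_on_subset[OF cont] h s by fastforce
  have "r \<in> Z" using r h s unfolding Z_def by auto
  hence "s \<le> r" unfolding s_def by (rule cInf_lower) (use \<open>bdd_below Z\<close> in auto)
  thus False using r h by auto
qed



lemma key_pos:
  fixes y q d qd :: "real \<Rightarrow> real"
  assumes yder: "\<And>t. t \<ge> 0 \<Longrightarrow> (y has_real_derivative (d t - q t / y t)) (at t within {0..})"
    and qder: "\<And>t. t \<ge> 0 \<Longrightarrow> (q has_real_derivative qd t) (at t within {0..})"
    and ypos: "\<And>t. t \<ge> 0 \<Longrightarrow> y t > 0"
    and dB: "\<And>t. t \<ge> 0 \<Longrightarrow> \<bar>d t\<bar> \<le> D" and qB: "\<And>t. t \<ge> 0 \<Longrightarrow> \<bar>qd t\<bar> \<le> K"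
  shows "\<exists>M. \<forall>t\<ge>0. \<bar>q t / y t\<bar> \<le> M"
proof -
  define W0 where "W0 = D + K + 1"
  define w where "w t = q t / y t" for t
  have D0: "D \<ge> 0" using dB[of 0] by simp
  have K0: "K \<ge> 0" using qB[of 0] by simp
  have W01: "W0 \<ge> 1" "W0 \<ge> D + 1" "W0 \<ge> K + 1" "W0 - D = K + 1" "K \<ge> 0" using D0 K0 unfolding W0_def by auto
  have wder: "(w has_real_derivative (qd t - w t * (d t - w t)) / y t) (at t within {0..})"
    if "t \<ge> 0" for t
  proof -
    have "(w has_real_derivative (qd t * y t - q t * (d t - q t / y t)) / (y t * y t)) (at t within {0..})"
      unfolding w_def[abs_def] using qder[OF that] yder[OF that] ypos[OF that]
      by (intro DERIV_divide) auto
    moreover have "(qd t * y t - q t * (d t - q t / y t)) / (y t * y t) = (qd t - w t * (d t - w t)) / y t"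
      using ypos[OF that] unfolding w_def by (simp add: field_simps)
    ultimately show ?thesis by simp
  qed
  have wcont: "continuous_on {a..b} w" if "0 \<le> a" for a b
    unfolding continuous_on_eq_continuous_within
    using that by (auto intro!: continuous_within_subset[OF DERIV_continuous[OF wder]])
  have ycont: "continuous_on {a..b} y" if "0 \<le> a" for a b
    unfolding continuous_on_eq_continuous_within
    using that by (auto intro!: continuous_within_subset[OF DERIV_continuous[OF yder]])
  have up: "w t \<le> W0" if t: "t \<ge> 0" for t
  proof (rule ccontr)
    assume "\<not> w t \<le> W0"
    hence wt: "w t > W0" by simp
    have stay: "w b > W0" if "b \<ge> t" for b
    proof (rule barrier[OF wcont[OF \<open>t\<ge>0\<close>] that wt])
      fix s assume s: "t \<le> s" "s \<le> b" "w s = W0"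
      have "(w has_real_derivative (qd s - w s * (d s - w s)) / y s) (at s within {t..b})"
        using wder[of s] s t by (auto intro: DERIV_subset)
      moreover have "(qd s - w s * (d s - w s)) / y s > 0"
      proof -
        have "W0 * D \<ge> w s * d s" using s dB[of s] t W01 by (simp add: abs_le_iff mult_left_mono)
        moreover have "W0 * (W0 - D) \<ge> 1 * (K + 1)" using W01 by (intro mult_mono) auto
        ultimately have "qd s - w s * (d s - w s) > 0" using qB[of s] s t by (auto simp: algebra_simps abs_le_iff)
        thus ?thesis using ypos[of s] s t by simp
      qed
      ultimately show "(w has_real_derivative (qd s - w s * (d s - w s)) / y s) (at s within {t..b}) \<and>
          (qd s - w s * (d s - w s)) / y s > 0" by simp
    qed
    define b where "b = t + y t + 1"
    have "y b \<le> y t - 1 * (b - t)"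
    proof (rule deriv_le_decr[where f'="\<lambda>s. d s - q s / y s"])
      fix s assume s: "t \<le> s" "s \<le> b"
      show "(y has_real_derivative d s - q s / y s) (at s within {t..b})"
        using yder[of s] s t by (auto intro: DERIV_subset)
      have "d s - q s / y s \<le> D - W0" using dB[of s] stay[of s] s t unfolding w_def by auto
      thus "d s - q s / y s \<le> - 1" using W01 by simp
    next
      show "t \<le> b" using ypos[OF t] unfolding b_def by simp
    qed
    hence "y b < 0" unfolding b_def by simp
    thus False using ypos[of b] ypos[OF t] t unfolding b_def by simp
  qed
  define m where "m = min (w 0) (- W0) - 1"
  have low: "w t > m" if t: "t \<ge> 0" for t
  proof (rule barrier[OF wcont[of 0, OF order_refl] t])
    show "w 0 > m" unfolding m_def by simp
    fix s assume s: "0 \<le> s" "s \<le> t" "w s = m"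
    have "(w has_real_derivative (qd s - w s * (d s - w s)) / y s) (at s within {0..t})"
      using wder[of s] s by (auto intro: DERIV_subset)
    moreover have "(qd s - w s * (d s - w s)) / y s > 0"
    proof -
      have mle: "m \<le> - W0 - 1" unfolding m_def by simp
      have "m * (D + d s) \<le> 0" using s dB[of s] mle W01 by (intro mult_nonpos_nonneg) (auto simp: abs_le_iff)
      hence "- (w s * d s) \<ge> m * D" using s by (simp add: algebra_simps)
      moreover have "(-m) * (-m - D) \<ge> (W0 + 1) * (K + 1)" using W01 mle by (intro mult_mono) auto
      moreover have "(W0 + 1) * (K + 1) \<ge> 1 * (K + 1)" using W01 by (intro mult_right_mono) auto
      moreover have "qd s \<ge> - K" using qB[of s] s by (simp add: abs_le_iff)
      ultimately have "qd s - m * (d s - m) > 0" using s by (simp add: algebra_simps)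
      hence "qd s - w s * (d s - w s) > 0" using s by simp
      thus ?thesis using ypos[of s] s by simp
    qed
    ultimately show "(w has_real_derivative (qd s - w s * (d s - w s)) / y s) (at s within {0..t}) \<and>
          (qd s - w s * (d s - w s)) / y s > 0" by simp
  qed
  have "\<bar>q t / y t\<bar> \<le> max W0 (- m)" if "t \<ge> 0" for t
    using up[OF that] low[OF that] unfolding w_def abs_le_iff by linarith
  thus ?thesis by blast
qed



locale sys =
  fixes l1 l2 l3 us th c3 :: real
  assumes l1: "l1 > 0" and l2: "l2 > 0" and l3: "l3 > 0" and th: "th > 0" and c3: "c3 > 0"
begin

abbreviation "FB \<equiv> feedback l1 l2 l3 us th c3"
abbreviation "VV \<equiv> V3 l1 l2 l3 th"
abbreviation "traj \<equiv> cl_traj l1 l2 l3 us th c3"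

lemma comp_deriv:
  assumes "traj x" "t \<ge> 0"
  shows "((\<lambda>s. x s $ 1) has_real_derivative (us - FB (x t) - phi l2 (x t $ 2))) (at t within {0..})"
    "((\<lambda>s. x s $ 2) has_real_derivative (- phi l3 (x t $ 3))) (at t within {0..})"
    "((\<lambda>s. x s $ 3) has_real_derivative (- phi l1 (x t $ 1))) (at t within {0..})"
proof -
  have d: "(x has_vector_derivative cl_field l1 l2 l3 us th c3 (x t)) (at t within {0..})"
    using assms unfolding cl_traj_def by auto
  have "((\<lambda>s. x s $ i) has_real_derivative (cl_field l1 l2 l3 us th c3 (x t) $ i)) (at t within {0..})" for i
    unfolding has_real_derivative_iff_has_vector_derivative
    by (rule bounded_linear.has_vector_derivative[OF bounded_linear_vec_nth d])
  from this[of 1] this[of 2] this[of 3] show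
    "((\<lambda>s. x s $ 1) has_real_derivative (us - FB (x t) - phi l2 (x t $ 2))) (at t within {0..})"
    "((\<lambda>s. x s $ 2) has_real_derivative (- phi l3 (x t $ 3))) (at t within {0..})"
    "((\<lambda>s. x s $ 3) has_real_derivative (- phi l1 (x t $ 1))) (at t within {0..})"
    by (simp_all add: cl_field_def)
qed

lemma V3_deriv:
  assumes "traj x" "t \<ge> 0"
  shows "((\<lambda>s. VV (x s)) has_real_derivative
            (- th * (l3 / l2) * (phi l2 ((x t)$2))\<^sup>2
             - th * (l1 / l3) * (phi l3 (err1 (x t)))\<^sup>2
             - c3 * (phi l1 (err2 (x t)))\<^sup>2)) (at t within {0..})"
proof -
  note cd = comp_deriv[OF assms]
  define e1 e2 e3 where "e1 = x t $ 1" and "e2 = x t $ 2" and "e3 = x t $ 3"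
  define a b c where "a = exp e2" and "b = exp (e3 - e2)" and "c = exp (e1 - (e3 - e2))"
  have ea: "exp e3 = a * b" unfolding a_def b_def by (simp add: exp_add[symmetric])
  have eb: "exp e1 = b * c" unfolding c_def b_def by (simp add: exp_add[symmetric])
  have p1nz: "phi l1 (err2 (x t)) \<noteq> 0" using assms unfolding cl_traj_def by auto
  hence c1: "c \<noteq> 1" unfolding phi_def err2_def err1_def c_def e1_def e2_def e3_def using l1 by auto
  have "((\<lambda>s. VV (x s)) has_real_derivative
     th*(l2*(a-1))*(-(l3*(a*b-1))) + th*(l3*(b-1))*((-(l1*(b*c-1))) - (-(l3*(a*b-1))))
     + (l1*(c-1))*((us - FB (x t) - l2*(a-1)) - ((-(l1*(b*c-1))) - (-(l3*(a*b-1)))))) (at t within {0..})"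
    unfolding V3_def err1_def err2_def
    apply (rule derivative_eq_intros cd | simp)+
    apply (simp add: phi_def ea eb flip: e1_def e2_def e3_def a_def b_def c_def)
    apply (simp add: algebra_simps)
    done
  moreover have "th*(l2*(a-1))*(-(l3*(a*b-1))) + th*(l3*(b-1))*((-(l1*(b*c-1))) - (-(l3*(a*b-1))))
     + (l1*(c-1))*((us - FB (x t) - l2*(a-1)) - ((-(l1*(b*c-1))) - (-(l3*(a*b-1)))))
     = - th * (l3 / l2) * (phi l2 ((x t)$2))\<^sup>2
             - th * (l1 / l3) * (phi l3 (err1 (x t)))\<^sup>2
             - c3 * (phi l1 (err2 (x t)))\<^sup>2"
  proof -
    have ph: "phi l2 ((x t)$2) = l2*(a-1)" "phi l3 (err1 (x t)) = l3*(b-1)" "phi l1 (err2 (x t)) = l1*(c-1)"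
      unfolding phi_def a_def b_def c_def err1_def err2_def e1_def e2_def e3_def by auto
    have fb: "FB (x t) = us + (c3+1) * (l1*(c-1)) - th * ((l1/l3) / l1) * (l3*(b-1))\<^sup>2 + ((l1/l3) - 1 - th) * (l3*(b-1))
         + ((l1/l3) / l1) * (l3*(b-1)) * (l1*(c-1)) - ((l3/l2) / l3) * (l3*(b-1)) * (l2*(a-1)) - ((l3/l2) + 1) * (l2*(a-1))
         + (th * (l3*(b-1)) / (l1*(c-1))) * (((l3/l2) / l3) * (l3*(b-1)) * (l2*(a-1)) - ((l3/l2) / l3) * (l2*(a-1))\<^sup>2 + ((l3/l2) - 1) * (l2*(a-1)) + (l3*(b-1)))"
      unfolding feedback_def Let_def ph[symmetric] ..
    have "c - 1 \<noteq> 0" using c1 by simp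
    then show ?thesis
      unfolding ph fb using l1 l2 l3 by (simp add: field_simps power2_eq_square)
  qed
  ultimately show ?thesis by simp
qed

end


definition gg :: "real \<Rightarrow> real" where "gg x = exp x - 1 - x"

lemma exp_strict: "x \<noteq> 0 \<Longrightarrow> 1 + x < exp (x::real)"
proof (cases "1 + x/2 \<ge> 0")
  case True
  assume x: "x \<noteq> 0"
  have "(1 + x/2) * (1 + x/2) \<le> exp (x/2) * exp (x/2)"
    using True by (intro mult_mono) auto
  also have "\<dots> = exp x" by (simp add: exp_add[symmetric])
  finally have "1 + x + x*x/4 \<le> exp x" by (simp add: algebra_simps)
  moreover have "x*x > 0" using x not_real_square_gt_zero by blast
  ultimately show ?thesis by simp
next
  case False
  hence "1 + x < 0" by simp
  thus ?thesis using exp_gt_zero[of x] by linarith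
qed

lemma gg_nonneg: "gg x \<ge> 0" unfolding gg_def using exp_ge_add_one_self[of x] by linarith
lemma gg_pos: "x \<noteq> 0 \<Longrightarrow> gg x > 0" unfolding gg_def using exp_strict[of x] by simp
lemma gg_abs: "\<bar>x\<bar> \<le> gg x + 1"
proof (cases "x \<ge> 0")
  case True
  have "1 + x/2 \<le> exp (x/2)" by simp
  hence "(1 + x/2) * (1 + x/2) \<le> exp (x/2) * exp (x/2)" using True by (intro mult_mono) auto
  also have "\<dots> = exp x" by (simp add: exp_add[symmetric])
  finally have "1 + x + x*x/4 \<le> exp x" by (simp add: algebra_simps)
  moreover have "x*x \<ge> 0" by simp
  moreover have "x \<le> 1 + x*x/4" proof -
    have "(x/2 - 1)*(x/2-1) \<ge> 0" by simp
    thus ?thesis by (simp add: algebra_simps)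
  qed
  ultimately show ?thesis using True unfolding gg_def by simp
next
  case False
  thus ?thesis unfolding gg_def using exp_gt_zero[of x] by simp
qed
lemma gg_mono_pos: assumes "0 \<le> r" "r \<le> x" shows "gg r \<le> gg x"
proof -
  have "exp x = exp r * exp (x - r)" by (simp add: exp_add[symmetric])
  also have "\<dots> \<ge> exp r * (1 + (x - r))" by (intro mult_left_mono) auto
  finally have "exp x \<ge> exp r + exp r * (x - r)" by (simp add: algebra_simps)
  moreover have "exp r * (x - r) \<ge> 1 * (x - r)" using assms by (intro mult_right_mono) auto
  ultimately show ?thesis unfolding gg_def by simp
qed
lemma gg_mono_neg: assumes "0 \<le> r" "x \<le> -r" shows "gg (-r) \<le> gg x"
proof -
  have "exp (-r) = exp x * exp (-r - x)" by (simp add: exp_add[symmetric])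
  also have "\<dots> \<le> 1 * exp (-r - x)" using assms by (intro mult_right_mono) auto
  finally have a: "exp (-r) \<le> exp (-r - x)" by simp
  have "exp (-r) * (1 - exp (x + r)) \<le> 1 * (-r - x)"
  proof (rule mult_mono)
    show "exp (-r) \<le> 1" using assms by simp
    show "1 - exp (x + r) \<le> -r - x" using exp_ge_add_one_self[of "x + r"] by linarith
  qed (use assms in auto)
  moreover have "exp (-r) * exp (x + r) = exp x" by (simp add: exp_add[symmetric])
  ultimately show ?thesis unfolding gg_def by (simp add: algebra_simps)
qed
lemma gg_small: assumes "r > 0" "gg x < min (gg r) (gg (-r))" shows "\<bar>x\<bar> < r"
proof (rule ccontr)
  assume "\<not> \<bar>x\<bar> < r"
  hence "x \<ge> r \<or> x \<le> -r" by auto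
  thus False using gg_mono_pos[of r x] gg_mono_neg[of r x] assms by auto
qed

lemma expm1_bound: fixes x r :: real assumes "r > 0" "\<bar>x\<bar> \<ge> r" shows "\<bar>exp x - 1\<bar> \<ge> 1 - exp (-r)"
proof (cases "x \<ge> 0")
  case True
  hence "x \<ge> r" using assms abs_of_nonneg[of x] by linarith
  have "exp x - 1 \<ge> x" using exp_ge_add_one_self[of x] by linarith
  moreover have "1 - exp (-r) \<le> r" using exp_ge_add_one_self[of "-r"] by simp
  ultimately show ?thesis using \<open>x \<ge> r\<close> by simp
next
  case False
  hence "x \<le> -r" using assms by simp
  hence "exp x \<le> exp (-r)" by simp
  moreover have "exp x < 1" using False by simp
  ultimately show ?thesis by simp
qed

lemma norm3: "norm (v::real^3) \<le> \<bar>v$1\<bar> + \<bar>v$2\<bar> + \<bar>v$3\<bar>"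
  using norm_le_l1_cart[of v] by (simp add: sum_3)

context sys begin

definition "W \<eta> = th * (l3 / l2) * (phi l2 (\<eta>$2))\<^sup>2 + th * (l1 / l3) * (phi l3 (err1 \<eta>))\<^sup>2
             + c3 * (phi l1 (err2 \<eta>))\<^sup>2"

lemma VV_gg: "VV \<eta> = th * l2 * gg (\<eta>$2) + th * l3 * gg (err1 \<eta>) + l1 * gg (err2 \<eta>)"
  unfolding V3_def gg_def ..

lemma VV_nonneg: "VV \<eta> \<ge> 0"
  unfolding VV_gg using gg_nonneg l1 l2 l3 th by (intro add_nonneg_nonneg mult_nonneg_nonneg) auto

lemma V3_decr:
  assumes "traj x" "0 \<le> a" "a \<le> b" "\<And>s. a \<le> s \<Longrightarrow> s \<le> b \<Longrightarrow> W (x s) \<ge> k"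
  shows "VV (x b) \<le> VV (x a) - k * (b - a)"
proof (rule deriv_le_decr[where f'="\<lambda>s. - W (x s)"])
  fix s assume s: "a \<le> s" "s \<le> b"
  have "- W (x s) = (- th * (l3 / l2) * (phi l2 ((x s)$2))\<^sup>2
             - th * (l1 / l3) * (phi l3 (err1 (x s)))\<^sup>2
             - c3 * (phi l1 (err2 (x s)))\<^sup>2)" unfolding W_def by simp
  then show "((\<lambda>s. VV (x s)) has_real_derivative - W (x s)) (at s within {a..b})"
    using V3_deriv[OF assms(1), of s] s assms(2)
    by (auto intro: DERIV_subset)
  show "- W (x s) \<le> - k" using assms(4) s by simp
qed (use assms in auto)

lemma V3_mono: assumes "traj x" "0 \<le> a" "a \<le> b" shows "VV (x b) \<le> VV (x a)"
proof -
  have "W \<eta> \<ge> 0" for \<eta> unfolding W_def using l1 l2 l3 th c3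
    by (intro add_nonneg_nonneg mult_nonneg_nonneg) auto
  thus ?thesis using V3_decr[OF assms, of 0] by auto
qed

lemma VV_small: assumes "\<epsilon> > 0" shows "\<exists>c>0. \<forall>\<eta>. VV \<eta> < c \<longrightarrow> norm \<eta> < \<epsilon>"
proof -
  define r where "r = \<epsilon> / 5"
  have r: "r > 0" using assms unfolding r_def by simp
  define m where "m = min (gg r) (gg (-r))"
  have m: "m > 0" unfolding m_def using gg_pos r by simp
  define c where "c = min (th * l2) (min (th * l3) l1) * m"
  have c: "c > 0" unfolding c_def using m l1 l2 l3 th by simp
  have "norm \<eta> < \<epsilon>" if V: "VV \<eta> < c" for \<eta>
  proof -
    have t1: "th * l2 * gg (\<eta>$2) < c" "th * l3 * gg (err1 \<eta>) < c" "l1 * gg (err2 \<eta>) < c"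
      using V gg_nonneg[of "\<eta>$2"] gg_nonneg[of "err1 \<eta>"] gg_nonneg[of "err2 \<eta>"] l1 l2 l3 th
      unfolding VV_gg by (smt (verit) mult_nonneg_nonneg)+
    have "th * l2 * gg (\<eta>$2) < th * l2 * m"
      using t1(1) unfolding c_def by (smt (verit) m min.cobounded1 mult_right_mono)
    hence a: "gg (\<eta>$2) < m" using th l2 by simp
    have "th * l3 * gg (err1 \<eta>) < th * l3 * m"
      using t1(2) unfolding c_def by (smt (verit) m min.cobounded1 min.cobounded2 mult_right_mono)
    hence b: "gg (err1 \<eta>) < m" using th l3 by simp
    have "l1 * gg (err2 \<eta>) < l1 * m"
      using t1(3) unfolding c_def by (smt (verit) m min.cobounded2 mult_right_mono)
    hence cc: "gg (err2 \<eta>) < m" using l1 by simp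
    have "\<bar>\<eta>$2\<bar> < r" "\<bar>err1 \<eta>\<bar> < r" "\<bar>err2 \<eta>\<bar> < r"
      using gg_small[OF r] a b cc unfolding m_def by auto
    hence "\<bar>\<eta>$1\<bar> + \<bar>\<eta>$2\<bar> + \<bar>\<eta>$3\<bar> < 5 * r" unfolding err1_def err2_def by linarith
    thus ?thesis using norm3[of \<eta>] unfolding r_def by simp
  qed
  thus ?thesis using c by blast
qed

lemma VV_cont0: assumes "c > 0" shows "\<exists>\<delta>>0. \<forall>\<eta>. norm \<eta> < \<delta> \<longrightarrow> VV \<eta> < c"
proof -
  have "continuous (at 0) VV"
    unfolding V3_def err1_def err2_def by (intro continuous_intros)
  moreover have "VV 0 = 0" unfolding V3_def err1_def err2_def by simp
  ultimately show ?thesis using assms unfolding continuous_at_eps_delta dist_norm by fastforce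
qed

lemma W_big: assumes "\<rho> > 0" shows "\<exists>w0>0. \<forall>\<eta>. norm \<eta> \<ge> \<rho> \<longrightarrow> W \<eta> \<ge> w0"
proof -
  define r where "r = \<rho> / 5"
  have r: "r > 0" using assms unfolding r_def by simp
  define \<kappa> where "\<kappa> = 1 - exp (-r)"
  have \<kappa>: "\<kappa> > 0" unfolding \<kappa>_def using r by simp
  define k where "k = min (th * (l3/l2) * l2\<^sup>2) (min (th * (l1/l3) * l3\<^sup>2) (c3 * l1\<^sup>2))"
  have k: "k > 0" unfolding k_def using l1 l2 l3 th c3 by simp
  have "W \<eta> \<ge> k * \<kappa>\<^sup>2" if n: "norm \<eta> \<ge> \<rho>" for \<eta>
  proof -
    have "\<not> (\<bar>\<eta>$2\<bar> < r \<and> \<bar>err1 \<eta>\<bar> < r \<and> \<bar>err2 \<eta>\<bar> < r)"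
    proof
      assume "\<bar>\<eta>$2\<bar> < r \<and> \<bar>err1 \<eta>\<bar> < r \<and> \<bar>err2 \<eta>\<bar> < r"
      hence "\<bar>\<eta>$1\<bar> + \<bar>\<eta>$2\<bar> + \<bar>\<eta>$3\<bar> < 5 * r" unfolding err1_def err2_def by linarith
      thus False using norm3[of \<eta>] n unfolding r_def by simp
    qed
    have sq: "(phi l z)\<^sup>2 \<ge> l\<^sup>2 * \<kappa>\<^sup>2" if "\<bar>z\<bar> \<ge> r" for l z
    proof -
      have "\<bar>exp z - 1\<bar> \<ge> \<kappa>" using expm1_bound[OF r that] unfolding \<kappa>_def .
      hence "\<kappa>\<^sup>2 \<le> (exp z - 1)\<^sup>2" using \<kappa> by (metis abs_of_pos less_le power2_abs power_mono)
      thus ?thesis unfolding phi_def by (simp add: power_mult_distrib mult_left_mono)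
    qed
    have W: "W \<eta> = (th * (l3/l2)) * (phi l2 (\<eta>$2))\<^sup>2 + (th * (l1/l3)) * (phi l3 (err1 \<eta>))\<^sup>2
             + c3 * (phi l1 (err2 \<eta>))\<^sup>2" unfolding W_def by simp
    have p: "th * (l3/l2) > 0" "th * (l1/l3) > 0" "c3 > 0" using l1 l2 l3 th c3 by auto
    have nn: "(th * (l3/l2)) * (phi l2 (\<eta>$2))\<^sup>2 \<ge> 0" "(th * (l1/l3)) * (phi l3 (err1 \<eta>))\<^sup>2 \<ge> 0"
       "c3 * (phi l1 (err2 \<eta>))\<^sup>2 \<ge> 0" using l1 l2 l3 th c3 by auto
    have k1: "k \<le> th * (l3/l2) * l2\<^sup>2" "k \<le> th * (l1/l3) * l3\<^sup>2" "k \<le> c3 * l1\<^sup>2" unfolding k_def by auto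
    have "\<kappa>\<^sup>2 \<ge> 0" by simp
    consider "\<bar>\<eta>$2\<bar> \<ge> r" | "\<bar>err1 \<eta>\<bar> \<ge> r" | "\<bar>err2 \<eta>\<bar> \<ge> r" using \<open>\<not> _\<close> by linarith
    thus ?thesis
    proof cases
      case 1
      have "k * \<kappa>\<^sup>2 \<le> (th * (l3/l2)) * (l2\<^sup>2 * \<kappa>\<^sup>2)" using k1 \<open>\<kappa>\<^sup>2 \<ge> 0\<close>
        by (metis mult.assoc mult_right_mono)
      also have "\<dots> \<le> (th * (l3/l2)) * (phi l2 (\<eta>$2))\<^sup>2" using sq[OF 1] p by (intro mult_left_mono) auto
      finally show ?thesis using W nn by linarith
    next
      case 2
      have "k * \<kappa>\<^sup>2 \<le> (th * (l1/l3)) * (l3\<^sup>2 * \<kappa>\<^sup>2)" using k1 \<open>\<kappa>\<^sup>2 \<ge> 0\<close>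
        by (metis mult.assoc mult_right_mono)
      also have "\<dots> \<le> (th * (l1/l3)) * (phi l3 (err1 \<eta>))\<^sup>2" using sq[OF 2] p by (intro mult_left_mono) auto
      finally show ?thesis using W nn by linarith
    next
      case 3
      have "k * \<kappa>\<^sup>2 \<le> c3 * (l1\<^sup>2 * \<kappa>\<^sup>2)" using k1 \<open>\<kappa>\<^sup>2 \<ge> 0\<close>
        by (metis mult.assoc mult_right_mono)
      also have "\<dots> \<le> c3 * (phi l1 (err2 \<eta>))\<^sup>2" using sq[OF 3] p by (intro mult_left_mono) auto
      finally show ?thesis using W nn by linarith
    qed
  qed
  thus ?thesis using k \<kappa> by (intro exI[of _ "k * \<kappa>\<^sup>2"]) auto
qed

end


lemma key_gen:
  fixes y q d qd :: "real \<Rightarrow> real"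
  assumes yder: "\<And>t. t \<ge> 0 \<Longrightarrow> (y has_real_derivative (d t - q t / y t)) (at t within {0..})"
    and qder: "\<And>t. t \<ge> 0 \<Longrightarrow> (q has_real_derivative qd t) (at t within {0..})"
    and ynz: "\<And>t. t \<ge> 0 \<Longrightarrow> y t \<noteq> 0"
    and dB: "\<And>t. t \<ge> 0 \<Longrightarrow> \<bar>d t\<bar> \<le> D" and qB: "\<And>t. t \<ge> 0 \<Longrightarrow> \<bar>qd t\<bar> \<le> K"
  shows "\<exists>M. \<forall>t\<ge>0. \<bar>q t / y t\<bar> \<le> M"
proof -
  have ycont: "continuous_on {0..t} y" for t
    unfolding continuous_on_eq_continuous_within
    by (auto intro!: continuous_within_subset[OF DERIV_continuous[OF yder]])
  show ?thesis
  proof (cases "y 0 > 0")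
    case True
    have "y t > 0" if t: "t \<ge> 0" for t
    proof (rule ccontr)
      assume "\<not> y t > 0"
      hence "y t \<le> 0" by simp
      from IVT2'[of y t 0 0, OF this less_imp_le[OF True] t ycont]
      obtain s where "0 \<le> s" "s \<le> t" "y s = 0" by auto
      thus False using ynz by auto
    qed
    thus ?thesis using key_pos[OF yder qder _ dB qB] by blast
  next
    case False
    hence y0: "y 0 < 0" using ynz[of 0] by simp
    have ypos: "- y t > 0" if t: "t \<ge> 0" for t
    proof (rule ccontr)
      assume "\<not> - y t > 0"
      hence "0 \<le> y t" by simp
      from IVT'[of y 0 0 t, OF less_imp_le[OF y0] this t ycont]
      obtain s where "0 \<le> s" "s \<le> t" "y s = 0" by auto
      thus False using ynz by auto
    qed
    have "((\<lambda>t. - y t) has_real_derivative ((- d t) - q t / (- y t))) (at t within {0..})" if "t \<ge> 0" for t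
      using DERIV_minus[OF yder[OF that]] by simp
    from key_pos[where y="\<lambda>t. - y t" and d="\<lambda>t. - d t", OF this qder ypos _ qB] dB
    obtain M where "\<forall>t\<ge>0. \<bar>q t / - y t\<bar> \<le> M" by fastforce
    thus ?thesis by auto
  qed
qed

lemma cont_bounded:
  fixes f :: "real^3 \<Rightarrow> real"
  assumes "continuous_on UNIV f"
  shows "\<exists>M. \<forall>\<eta>. norm \<eta> \<le> R \<longrightarrow> \<bar>f \<eta>\<bar> \<le> M"
proof -
  have "compact (f ` cball 0 R)"
    by (rule compact_continuous_image[OF continuous_on_subset[OF assms] compact_cball]) simp
  then obtain M where "\<forall>v\<in>f ` cball 0 R. norm v \<le> M" using compact_imp_bounded bounded_iff by metis
  thus ?thesis by (intro exI[of _ M]) auto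
qed

lemma aux_div: "(l::real) \<noteq> 0 \<Longrightarrow> th*p/y*B = th*l*p*B/(l*y)"
  by (cases "y = 0") (simp_all add: field_simps)
lemma yalg: "(l::real) \<noteq> 0 \<Longrightarrow> E - 1 \<noteq> 0 \<Longrightarrow>
  l*E*((us - (G + q/(l*(l*(E-1)))) - A) - (-B - -C)) = (l*E*(us - G - A + B - C) - q/l) - q/(l*(E-1))"
  by (simp add: field_simps)
context sys begin

definition "p1f \<eta> = phi l1 (err2 \<eta>)"
definition "p3f \<eta> = phi l3 (err1 \<eta>)"
definition "p2f \<eta> = phi l2 (\<eta>$2)"
definition "Bf \<eta> = ((l3/l2)/l3)*p3f \<eta>*p2f \<eta> - ((l3/l2)/l3)*(p2f \<eta>)\<^sup>2 + ((l3/l2)-1)*p2f \<eta> + p3f \<eta>"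
definition "qf \<eta> = th*l1*p3f \<eta>*Bf \<eta>"
definition "Gf \<eta> = us + (c3+1)*p1f \<eta> - th*((l1/l3)/l1)*(p3f \<eta>)\<^sup>2 + ((l1/l3)-1-th)*p3f \<eta>
   + ((l1/l3)/l1)*p3f \<eta>*p1f \<eta> - ((l3/l2)/l3)*p3f \<eta>*p2f \<eta> - ((l3/l2)+1)*p2f \<eta>"

lemma FB_split: "FB \<eta> = Gf \<eta> + qf \<eta> / (l1 * p1f \<eta>)"
proof -
  have "l1 \<noteq> 0" using l1 by simp
  note a = aux_div[OF this, of th "p3f \<eta>" "p1f \<eta>" "Bf \<eta>"]
  show ?thesis
  unfolding feedback_def Let_def Gf_def qf_def 
  unfolding p1f_def[symmetric] p2f_def[symmetric] p3f_def[symmetric] Bf_def[symmetric] a by simp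
qed
definition "df \<eta> = l1*exp(err2 \<eta>)*(us - Gf \<eta> - phi l2 (\<eta>$2) + phi l1 (\<eta>$1) - phi l3 (\<eta>$3)) - qf \<eta> / l1"
definition "qdf \<eta> = (let z1 = err1 \<eta>; a2 = \<eta>$2;
   dz1 = - phi l1 (\<eta>$1) + phi l3 (\<eta>$3); da2 = - phi l3 (\<eta>$3);
   dp3 = l3*exp z1*dz1; dp2 = l2*exp a2*da2; c = (l3/l2)/l3;
   dB = c*(dp3*p2f \<eta> + p3f \<eta>*dp2) - c*2*p2f \<eta>*dp2 + ((l3/l2)-1)*dp2 + dp3
   in th*l1*(dp3*Bf \<eta> + p3f \<eta>*dB))"
lemma conts: "continuous_on UNIV Gf" "continuous_on UNIV df" "continuous_on UNIV qdf"
  unfolding Gf_def df_def qdf_def Let_def qf_def Bf_def p1f_def p2f_def p3f_def phi_def err1_def err2_def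
  using l1 l2 l3 by (auto intro!: continuous_intros)

lemma y_deriv:
  assumes "traj x" "t \<ge> 0"
  shows "((\<lambda>s. p1f (x s)) has_real_derivative (df (x t) - qf (x t) / p1f (x t))) (at t within {0..})"
proof -
  note cd = comp_deriv[OF assms]
  have nz: "p1f (x t) \<noteq> 0" using assms unfolding cl_traj_def p1f_def by auto
  have "((\<lambda>s. p1f (x s)) has_real_derivative
       l1 * exp (err2 (x t)) * ((us - FB (x t) - phi l2 (x t $ 2)) - (- phi l1 (x t $ 1) - - phi l3 (x t $ 3))))
       (at t within {0..})"
    unfolding p1f_def phi_def err2_def err1_def
    apply (rule derivative_eq_intros cd | simp)+
    apply (simp add: phi_def)
    done
  moreover have "l1 * exp (err2 (x t)) * ((us - FB (x t) - phi l2 (x t $ 2)) - (- phi l1 (x t $ 1) - - phi l3 (x t $ 3)))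
     = df (x t) - qf (x t) / p1f (x t)"
  proof -
    define E where "E = exp (err2 (x t))"
    have y: "p1f (x t) = l1 * (E - 1)" unfolding E_def p1f_def phi_def ..
    have E1: "E - 1 \<noteq> 0" using nz y by auto
    show ?thesis unfolding FB_split df_def E_def[symmetric] y
      using yalg[OF _ E1, of l1] l1 by simp
  qed
  ultimately show ?thesis by simp
qed

lemma q_deriv:
  assumes "traj x" "t \<ge> 0"
  shows "((\<lambda>s. qf (x s)) has_real_derivative qdf (x t)) (at t within {0..})"
proof -
  note cd = comp_deriv(2,3)[OF assms]
  show ?thesis
    unfolding qf_def qdf_def Bf_def p2f_def p3f_def phi_def err1_def Let_def
    apply (rule derivative_eq_intros cd | simp)+
    using l2 apply (simp add: phi_def field_simps power2_eq_square)
    done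
qed

lemma state_bound:
  assumes "traj x"
  shows "\<exists>R. \<forall>t\<ge>0. norm (x t) \<le> R"
proof -
  define V0 where "V0 = VV (x 0)"
  define S where "S = V0/(th*l2) + V0/(th*l3) + V0/l1 + 1"
  have V0: "V0 \<ge> 0" unfolding V0_def by (rule VV_nonneg)
  have nn: "V0/(th*l2) \<ge> 0" "V0/(th*l3) \<ge> 0" "V0/l1 \<ge> 0" using V0 l1 l2 l3 th by auto
  have "norm (x t) \<le> 5 * S" if t: "t \<ge> 0" for t
  proof -
    have Vt: "VV (x t) \<le> V0" unfolding V0_def using V3_mono[OF assms order_refl t] .
    have g: "gg (x t $ 2) \<ge> 0" "gg (err1 (x t)) \<ge> 0" "gg (err2 (x t)) \<ge> 0" by (rule gg_nonneg)+
    have p: "th * l2 > 0" "th * l3 > 0" using th l2 l3 by auto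
    have "th * l2 * gg (x t $ 2) \<le> V0" "th * l3 * gg (err1 (x t)) \<le> V0" "l1 * gg (err2 (x t)) \<le> V0"
      using Vt g p l1 unfolding VV_gg by (smt (verit) mult_nonneg_nonneg)+
    hence "gg (x t $ 2) \<le> V0/(th*l2)" "gg (err1 (x t)) \<le> V0/(th*l3)" "gg (err2 (x t)) \<le> V0/l1"
      using p l1 by (simp_all add: field_simps mult.commute)
    hence "\<bar>x t $ 2\<bar> \<le> S" "\<bar>err1 (x t)\<bar> \<le> S" "\<bar>err2 (x t)\<bar> \<le> S"
      using gg_abs[of "x t $ 2"] gg_abs[of "err1 (x t)"] gg_abs[of "err2 (x t)"] nn unfolding S_def by linarith+
    hence "\<bar>x t $ 1\<bar> + \<bar>x t $ 2\<bar> + \<bar>x t $ 3\<bar> \<le> 5 * S" unfolding err1_def err2_def by linarith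
    thus ?thesis using norm3[of "x t"] by linarith
  qed
  thus ?thesis by blast
qed

lemma FB_bounded:
  assumes "traj x"
  shows "\<exists>M. \<forall>t\<ge>0. \<bar>FB (x t)\<bar> \<le> M"
proof -
  obtain R where R: "\<And>t. t \<ge> 0 \<Longrightarrow> norm (x t) \<le> R" using state_bound[OF assms] by blast
  obtain MG where MG: "\<And>\<eta>. norm \<eta> \<le> R \<Longrightarrow> \<bar>Gf \<eta>\<bar> \<le> MG" using cont_bounded[OF conts(1)] by blast
  obtain MD where MD: "\<And>\<eta>. norm \<eta> \<le> R \<Longrightarrow> \<bar>df \<eta>\<bar> \<le> MD" using cont_bounded[OF conts(2)] by blast
  obtain MQ where MQ: "\<And>\<eta>. norm \<eta> \<le> R \<Longrightarrow> \<bar>qdf \<eta>\<bar> \<le> MQ" using cont_bounded[OF conts(3)] by blast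
  have "\<exists>M. \<forall>t\<ge>0. \<bar>qf (x t) / p1f (x t)\<bar> \<le> M"
  proof (rule key_gen[where d="\<lambda>t. df (x t)" and qd="\<lambda>t. qdf (x t)"])
    show "((\<lambda>s. p1f (x s)) has_real_derivative (df (x t) - qf (x t) / p1f (x t))) (at t within {0..})"
      if "t \<ge> 0" for t using y_deriv[OF assms that] .
    show "((\<lambda>s. qf (x s)) has_real_derivative qdf (x t)) (at t within {0..})"
      if "t \<ge> 0" for t using q_deriv[OF assms that] .
    show "p1f (x t) \<noteq> 0" if "t \<ge> 0" for t using assms that unfolding cl_traj_def p1f_def by auto
    show "\<bar>df (x t)\<bar> \<le> MD" if "t \<ge> 0" for t using MD R that by blast
    show "\<bar>qdf (x t)\<bar> \<le> MQ" if "t \<ge> 0" for t using MQ R that by blast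
  qed
  then obtain M where M: "\<And>t. t \<ge> 0 \<Longrightarrow> \<bar>qf (x t) / p1f (x t)\<bar> \<le> M" by blast
  have "\<bar>FB (x t)\<bar> \<le> MG + M / l1" if t: "t \<ge> 0" for t
  proof -
    have "\<bar>qf (x t) / (l1 * p1f (x t))\<bar> = \<bar>qf (x t) / p1f (x t)\<bar> / l1" using l1 by (simp add: abs_divide abs_mult)
    also have "\<dots> \<le> M / l1" using M[OF t] l1 by (intro divide_right_mono) auto
    finally show ?thesis unfolding FB_split using MG[OF R[OF t]] by linarith
  qed
  thus ?thesis by blast
qed

end


theorem theorem3p3:
  fixes l1 l2 l3 us th c3 :: real
  assumes "l1 > 0" and "l2 > 0" and "l3 > 0" and "th > 0" and "c3 > 0"
  shows
    "(\<forall>x. cl_traj l1 l2 l3 us th c3 x \<longrightarrow>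
        (\<forall>t\<ge>0. ((\<lambda>s. V3 l1 l2 l3 th (x s)) has_real_derivative
            (- th * (l3 / l2) * (phi l2 ((x t)$2))\<^sup>2
             - th * (l1 / l3) * (phi l3 (err1 (x t)))\<^sup>2
             - c3 * (phi l1 (err2 (x t)))\<^sup>2)) (at t within {0..})))
   \<and> (\<forall>\<epsilon>>0. \<exists>\<delta>>0. \<forall>x. cl_traj l1 l2 l3 us th c3 x \<and> norm (x 0) < \<delta> \<longrightarrow>
        (\<forall>t\<ge>0. norm (x t) < \<epsilon>))
   \<and> (\<forall>x. cl_traj l1 l2 l3 us th c3 x \<longrightarrow> (x \<longlongrightarrow> 0) at_top)
   \<and> (\<forall>x. cl_traj l1 l2 l3 us th c3 x \<longrightarrow>
        (\<exists>M. \<forall>t\<ge>0. \<bar>feedback l1 l2 l3 us th c3 (x t)\<bar> \<le> M))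
   \<and> (\<forall>x. cl_traj l1 l2 l3 us th c3 x \<and>
          x 0 \<in> \<Union>{S. \<exists>c. S = {eta. V3 l1 l2 l3 th eta \<le> c} \<and>
                          S \<subseteq> {eta. feedback l1 l2 l3 us th c3 eta > 0}} \<longrightarrow>
        (\<forall>t>0. feedback l1 l2 l3 us th c3 (x t) > 0))"
proof -
  interpret sys l1 l2 l3 us th c3 using assms by unfold_locales
  have A: "\<forall>x. cl_traj l1 l2 l3 us th c3 x \<longrightarrow>
        (\<forall>t\<ge>0. ((\<lambda>s. V3 l1 l2 l3 th (x s)) has_real_derivative
            (- th * (l3 / l2) * (phi l2 ((x t)$2))\<^sup>2
             - th * (l1 / l3) * (phi l3 (err1 (x t)))\<^sup>2
             - c3 * (phi l1 (err2 (x t)))\<^sup>2)) (at t within {0..}))"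
    using V3_deriv by blast
  have B: "\<forall>\<epsilon>>0. \<exists>\<delta>>0. \<forall>x. cl_traj l1 l2 l3 us th c3 x \<and> norm (x 0) < \<delta> \<longrightarrow>
        (\<forall>t\<ge>0. norm (x t) < \<epsilon>)"
  proof (intro allI impI)
    fix \<epsilon> :: real assume "\<epsilon> > 0"
    then obtain c where c: "c > 0" "\<And>\<eta>. VV \<eta> < c \<Longrightarrow> norm \<eta> < \<epsilon>" using VV_small by blast
    obtain \<delta> where d: "\<delta> > 0" "\<And>\<eta>. norm \<eta> < \<delta> \<Longrightarrow> VV \<eta> < c" using VV_cont0[OF c(1)] by blast
    have "norm (x t) < \<epsilon>" if "traj x" "norm (x 0) < \<delta>" "t \<ge> 0" for x t
    proof -
      have "VV (x t) \<le> VV (x 0)" using V3_mono[OF that(1) order_refl that(3)] .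
      thus ?thesis using d(2)[OF that(2)] c(2) by force
    qed
    thus "\<exists>\<delta>>0. \<forall>x. traj x \<and> norm (x 0) < \<delta> \<longrightarrow> (\<forall>t\<ge>0. norm (x t) < \<epsilon>)"
      using d(1) by blast
  qed
  have C: "(x \<longlongrightarrow> 0) at_top" if tr: "traj x" for x
    unfolding tendsto_iff dist_norm diff_zero
  proof (intro allI impI)
    fix \<epsilon> :: real assume "\<epsilon> > 0"
    then obtain c where c: "c > 0" "\<And>\<eta>. VV \<eta> < c \<Longrightarrow> norm \<eta> < \<epsilon>" using VV_small by blast
    have "\<exists>T\<ge>0. VV (x T) < c"
    proof (rule ccontr)
      assume "\<not> (\<exists>T\<ge>0. VV (x T) < c)"
      hence ge: "\<And>T. T \<ge> 0 \<Longrightarrow> VV (x T) \<ge> c" by force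
      obtain \<delta> where d: "\<delta> > 0" "\<And>\<eta>. norm \<eta> < \<delta> \<Longrightarrow> VV \<eta> < c" using VV_cont0[OF c(1)] by blast
      obtain w0 where w: "w0 > 0" "\<And>\<eta>. norm \<eta> \<ge> \<delta> \<Longrightarrow> W \<eta> \<ge> w0" using W_big[OF d(1)] by blast
      define b where "b = VV (x 0) / w0 + 1"
      have b: "b \<ge> 0" unfolding b_def using VV_nonneg[of "x 0"] w(1) by simp
      have "VV (x b) \<le> VV (x 0) - w0 * (b - 0)"
      proof (rule V3_decr[OF tr order_refl b])
        fix s assume "0 \<le> s" "s \<le> b"
        hence "norm (x s) \<ge> \<delta>" using ge d(2) by (meson not_le)
        thus "W (x s) \<ge> w0" using w(2) by blast
      qed
      also have "\<dots> = - w0" unfolding b_def using w(1) by (simp add: field_simps)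
      finally show False using VV_nonneg[of "x b"] w(1) by simp
    qed
    then obtain T where T: "T \<ge> 0" "VV (x T) < c" by blast
    have "norm (x t) < \<epsilon>" if "t \<ge> T" for t
      using V3_mono[OF tr T(1) that] T(2) c(2) by force
    thus "\<forall>\<^sub>F t in at_top. norm (x t) < \<epsilon>" unfolding eventually_at_top_linorder by blast
  qed
  have E: "\<forall>x. cl_traj l1 l2 l3 us th c3 x \<and>
          x 0 \<in> \<Union>{S. \<exists>c. S = {eta. V3 l1 l2 l3 th eta \<le> c} \<and>
                          S \<subseteq> {eta. feedback l1 l2 l3 us th c3 eta > 0}} \<longrightarrow>
        (\<forall>t>0. feedback l1 l2 l3 us th c3 (x t) > 0)"
  proof (rule allI, rule impI)
    fix x assume h: "traj x \<and> x 0 \<in> \<Union>{S. \<exists>c. S = {eta. VV eta \<le> c} \<and> S \<subseteq> {eta. FB eta > 0}}"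
    then obtain c where c: "VV (x 0) \<le> c" "{eta. VV eta \<le> c} \<subseteq> {eta. FB eta > 0}" by blast
    show "\<forall>t>0. FB (x t) > 0"
    proof (intro allI impI)
      fix t :: real assume "t > 0"
      hence "VV (x t) \<le> VV (x 0)" using V3_mono[of x 0 t] h by simp
      hence "x t \<in> {eta. VV eta \<le> c}" using c(1) by simp
      thus "FB (x t) > 0" using c(2) by blast
    qed
  qed
  show ?thesis using A B C FB_bounded E by blast
qed

end
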